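(* Let $N>0$ and $\tau\in(0,1)$, and let $(v_1,v_2)$ be a radial solution of $(P)_\tau$ (as described in the context). For every $0<r_0<R_0$ there exist a constant $C_0=C_0(\tau,N,R_0/r_0)>0$ and $\gamma=\gamma(R_0/r_0)\in(0,1)$ (depending only on the indicated quantities) such that $$\max_{[r_0,R_0]}v_1\le\gamma\min_{[r_0,R_0]}v_1+2(N+1)(\gamma-1)\log r_0+C_0,$$ $$\max_{[r_0,R_0]}v_2\le\gamma\min_{[r_0,R_0]}v_2+2(\gamma-1)\log r_0+C_0.$$
   Context: A radial solution of $(P)_\tau$ is a pair $v_1,v_2\in C([0,\infty))\cap C^2((0,\infty))$ with, for $r>0$, $$-(rv_1')'=r^{2N+1}e^{v_1}-\tau re^{v_2},\qquad -(rv_2')'=re^{v_2}-\tau r^{2N+1}e^{v_1},$$ $v_1'(0)=v_2'(0)=0$, $$\beta_1=\int_0^\infty r^{2N+1}e^{v_1}\,dr<\infty,\qquad \beta_2=\int_0^\infty re^{v_2}\,dr<\infty,$$ and $\lim_{r\to\infty}rv_1'(r)=-(\beta_1-\tau\beta_2)$, $\lim_{r\to\infty}rv_2'(r)=-(\beta_2-\tau\beta_1)$. *)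

theory Defs
  imports "HOL-Analysis.Analysis"
begin

definition C2_pos :: "(real \<Rightarrow> real) \<Rightarrow> bool" where
  "C2_pos v \<longleftrightarrow>
     (\<forall>r>0. v differentiable (at r) \<and> deriv v differentiable (at r)) \<and>
     continuous_on {0<..} (deriv (deriv v))"

definition beta1 :: "real \<Rightarrow> (real \<Rightarrow> real) \<Rightarrow> real" where
  "beta1 N v1 = integral {0<..} (\<lambda>r. r powr (2*N+1) * exp (v1 r))"

definition beta2 :: "(real \<Rightarrow> real) \<Rightarrow> real" where
  "beta2 v2 = integral {0<..} (\<lambda>r. r * exp (v2 r))"

definition radial_solution :: "real \<Rightarrow> real \<Rightarrow> (real \<Rightarrow> real) \<Rightarrow> (real \<Rightarrow> real) \<Rightarrow> bool" where
  "radial_solution N \<tau> v1 v2 \<longleftrightarrow>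
     continuous_on {0..} v1 \<and> continuous_on {0..} v2 \<and>
     C2_pos v1 \<and> C2_pos v2 \<and>
     (\<forall>r>0. ((\<lambda>s. s * deriv v1 s) has_real_derivative
               - (r powr (2*N+1) * exp (v1 r) - \<tau> * r * exp (v2 r))) (at r)) \<and>
     (\<forall>r>0. ((\<lambda>s. s * deriv v2 s) has_real_derivative
               - (r * exp (v2 r) - \<tau> * r powr (2*N+1) * exp (v1 r))) (at r)) \<and>
     (v1 has_real_derivative 0) (at 0 within {0..}) \<and>
     (v2 has_real_derivative 0) (at 0 within {0..}) \<and>
     (\<lambda>r. r powr (2*N+1) * exp (v1 r)) integrable_on {0<..} \<and>
     (\<lambda>r. r * exp (v2 r)) integrable_on {0<..} \<and>
     ((\<lambda>r. r * deriv v1 r) \<longlongrightarrow> - (beta1 N v1 - \<tau> * beta2 v2)) at_top \<and>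
     ((\<lambda>r. r * deriv v2 r) \<longlongrightarrow> - (beta2 v2 - \<tau> * beta1 N v1)) at_top"

end

theory Submission
  imports Defs
begin

lemma u_to_0:
  fixes v :: "real \<Rightarrow> real" and D :: "real \<Rightarrow> real"
  assumes cont: "continuous_on {0..} v"
    and dv: "\<And>r. r>0 \<Longrightarrow> (v has_real_derivative deriv v r) (at r)"
    and dw: "\<And>r. r>0 \<Longrightarrow> ((\<lambda>s. s * deriv v s) has_real_derivative D r) (at r)"
    and bd: "\<And>r. 0<r \<Longrightarrow> r \<le> 1 \<Longrightarrow> \<bar>D r\<bar> \<le> K"
  shows "((\<lambda>r. r * deriv v r) \<longlongrightarrow> 0) (at_right 0)"
proof -
  have key: "\<bar>r * deriv v r\<bar> \<le> 2*\<bar>v r - v (r/2)\<bar> + K*r" if r: "0<r" "r\<le>1" for r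
  proof -
    obtain \<xi> where xi: "r/2 < \<xi>" "\<xi> < r" "v r - v (r/2) = (r - r/2) * deriv v \<xi>"
      using MVT2[of "r/2" r v "deriv v"] dv r by force
    have e: "\<xi> * deriv v \<xi> = (\<xi>/(r/2)) * (v r - v(r/2))" using xi r by (simp add: field_simps)
    have q: "0 \<le> \<xi>/(r/2)" "\<xi>/(r/2) \<le> 2" using xi r by (auto simp: field_simps)
    have h1: "\<bar>\<xi> * deriv v \<xi>\<bar> \<le> 2*\<bar>v r - v (r/2)\<bar>"
      unfolding e abs_mult using q by (intro mult_right_mono) auto
    obtain z where z: "\<xi> < z" "z < r" "r*deriv v r - \<xi>*deriv v \<xi> = (r - \<xi>) * D z"
      using MVT2[of \<xi> r "\<lambda>s. s*deriv v s" D] dw xi r by force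
    have "\<bar>D z\<bar> \<le> K" using bd z xi r by auto
    hence "\<bar>(r - \<xi>) * D z\<bar> \<le> r * K" unfolding abs_mult using xi r
      by (intro mult_mono) auto
    moreover have "r*deriv v r = \<xi>*deriv v \<xi> + (r - \<xi>) * D z" using z(3) by simp
    hence "\<bar>r*deriv v r\<bar> \<le> \<bar>\<xi>*deriv v \<xi>\<bar> + \<bar>(r - \<xi>) * D z\<bar>"
      by (metis abs_triangle_ineq)
    ultimately show ?thesis using h1 by (simp add: mult.commute)
  qed
  have hv: "(v \<longlongrightarrow> v 0) (at_right 0)"
    using cont unfolding continuous_on_def
    by (auto intro: tendsto_within_subset)
  have hl: "filterlim (\<lambda>r::real. r/2) (at_right 0) (at_right 0)"
    unfolding filterlim_at
  proof
    show "((\<lambda>r::real. r/2) \<longlongrightarrow> 0) (at_right 0)"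
      by (auto intro!: tendsto_eq_intros)
    show "\<forall>\<^sub>F x in at_right 0. x / 2 \<in> {0::real<..} \<and> x / 2 \<noteq> 0"
      by (auto simp: eventually_at_right_field intro!: exI[of _ 1])
  qed
  have hv2: "((\<lambda>r. v (r/2)) \<longlongrightarrow> v 0) (at_right 0)"
    using filterlim_compose[OF hv hl] .
  have lim: "((\<lambda>r. 2*\<bar>v r - v (r/2)\<bar> + K*r) \<longlongrightarrow> 0) (at_right 0)"
    by (rule tendsto_eq_intros hv hv2 | simp)+
  show ?thesis
  proof (rule Lim_null_comparison[OF _ lim])
    show "\<forall>\<^sub>F x in at_right 0. norm (x * deriv v x) \<le> 2 * \<bar>v x - v (x / 2)\<bar> + K * x"
      unfolding eventually_at_right_field
      by (auto intro!: exI[of _ 1] key)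
  qed
qed

lemma harnack:
  fixes v :: "real \<Rightarrow> real"
  assumes dv: "\<And>r. r>0 \<Longrightarrow> (v has_real_derivative deriv v r) (at r)"
    and bu: "\<And>r. r>0 \<Longrightarrow> \<bar>r * deriv v r\<bar> \<le> M"
    and bA: "\<And>r. r>0 \<Longrightarrow> r powr n * exp (v r) \<le> K"
    and K: "K > 0" and r0: "r0 > 0" and rho: "\<rho> > 1"
  shows "(SUP r\<in>{r0..\<rho>*r0}. v r) \<le> 1/2 * (INF r\<in>{r0..\<rho>*r0}. v r)
           + n * (1/2 - 1) * ln r0 + (M * ln \<rho> + \<bar>ln K\<bar> + 1)"
proof -
  define S where "S = {r0..\<rho>*r0}"
  have osc: "v x \<le> v y + M * ln \<rho>" if x: "x \<in> S" and y: "y \<in> S" for x y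
  proof (cases "y \<le> x")
    case True
    have "(\<lambda>t. v t - M * ln t) x \<le> (\<lambda>t. v t - M * ln t) y"
    proof (rule DERIV_nonpos_imp_nonincreasing[OF True])
      fix t assume t: "y \<le> t" "t \<le> x"
      hence tp: "t > 0" using y r0 unfolding S_def by auto
      have "((\<lambda>t. v t - M * ln t) has_real_derivative deriv v t - M * (1/t)) (at t)"
        by (rule derivative_eq_intros dv[OF tp] refl | use tp in simp)+
      moreover have "deriv v t - M * (1/t) \<le> 0"
      proof -
        have "t * deriv v t \<le> M" using bu[OF tp] by simp
        hence "deriv v t \<le> M / t" using tp by (simp add: field_simps)
        thus ?thesis by simp
      qed
      ultimately show "\<exists>y. ((\<lambda>t. v t - M * ln t) has_real_derivative y) (at t) \<and> y \<le> 0" by blast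
    qed
    hence "v x \<le> v y + M * (ln x - ln y)" by (simp add: algebra_simps)
    moreover have "ln x - ln y \<le> ln \<rho>"
    proof -
      have "ln x \<le> ln (\<rho>*r0)" "ln r0 \<le> ln y" using x y r0 rho unfolding S_def by auto
      moreover have "ln (\<rho>*r0) = ln \<rho> + ln r0" using r0 rho by (simp add: ln_mult)
      ultimately show ?thesis by linarith
    qed
    moreover have "M \<ge> 0" using bu[of 1] by simp
    ultimately show ?thesis by (smt (verit) mult_left_mono)
  next
    case False
    have "(\<lambda>t. v t + M * ln t) x \<le> (\<lambda>t. v t + M * ln t) y"
    proof (rule DERIV_nonneg_imp_nondecreasing[of x y])
      show "x \<le> y" using False by simp
    next
      fix t assume t: "x \<le> t" "t \<le> y"
      hence tp: "t > 0" using x r0 unfolding S_def by auto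
      have "((\<lambda>t. v t + M * ln t) has_real_derivative deriv v t + M * (1/t)) (at t)"
        by (rule derivative_eq_intros dv[OF tp] refl | use tp in simp)+
      moreover have "deriv v t + M * (1/t) \<ge> 0"
      proof -
        have "- M \<le> t * deriv v t" using bu[OF tp] by simp
        hence "- M / t \<le> deriv v t" using tp by (simp add: field_simps)
        thus ?thesis by simp
      qed
      ultimately show "\<exists>y. ((\<lambda>t. v t + M * ln t) has_real_derivative y) (at t) \<and> y \<ge> 0" by blast
    qed
    hence "v x \<le> v y + M * (ln y - ln x)" by (simp add: algebra_simps)
    moreover have "ln y - ln x \<le> ln \<rho>"
    proof -
      have "ln y \<le> ln (\<rho>*r0)" "ln r0 \<le> ln x" using x y r0 rho unfolding S_def by auto
      moreover have "ln (\<rho>*r0) = ln \<rho> + ln r0" using r0 rho by (simp add: ln_mult)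
      ultimately show ?thesis by linarith
    qed
    moreover have "M \<ge> 0" using bu[of 1] by simp
    ultimately show ?thesis by (smt (verit) mult_left_mono)
  qed
  have r0S: "r0 \<in> S" using r0 rho unfolding S_def by auto
  hence ne: "S \<noteq> {}" by auto
  have bdd: "bdd_below (v ` S)"
    by (rule bdd_belowI2[of _ "v r0 - M * ln \<rho>"]) (use osc r0S in force)
  define I where "I = (INF r\<in>S. v r)"
  have I1: "v x - M * ln \<rho> \<le> I" if "x \<in> S" for x
    unfolding I_def by (rule cINF_greatest[OF ne]) (use osc that in force)
  have I2: "I \<le> v r0" unfolding I_def by (rule cINF_lower[OF bdd r0S])
  have "ln (r0 powr n * exp (v r0)) \<le> ln K" using bA[OF r0] K r0 by simp
  hence I3: "n * ln r0 + v r0 \<le> ln K" using r0 by (simp add: ln_mult ln_powr)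
  have "(SUP r\<in>S. v r) \<le> 1/2 * I + n * (1/2 - 1) * ln r0 + (M * ln \<rho> + \<bar>ln K\<bar> + 1)"
  proof (rule cSUP_least[OF ne])
    fix x assume "x \<in> S"
    have e: "n * (1/2 - 1) * ln r0 = -(n*ln r0)/2" by (simp add: algebra_simps)
    have "ln K \<le> \<bar>ln K\<bar>" by simp
    with I1[OF \<open>x \<in> S\<close>] I2 I3 e show "v x \<le> 1/2 * I + n * (1/2 - 1) * ln r0 + (M * ln \<rho> + \<bar>ln K\<bar> + 1)"
      by linarith
  qed
  thus ?thesis unfolding S_def I_def .
qed

lemma Hderiv:
  fixes v1 v2 u p :: "real \<Rightarrow> real" and a b :: real
  assumes r: "r > 0"
   and dv1: "(v1 has_real_derivative deriv v1 r) (at r)"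
   and dv2: "(v2 has_real_derivative deriv v2 r) (at r)"
   and du: "(u has_real_derivative
               - (r powr (2*N+1) * exp (v1 r) - \<tau> * r * exp (v2 r))) (at r)"
   and dp: "(p has_real_derivative
               - (r * exp (v2 r) - \<tau> * r powr (2*N+1) * exp (v1 r))) (at r)"
   and ur: "u r = r * deriv v1 r" and pr: "p r = r * deriv v2 r"
   and a: "a = 2*N+2+2*\<tau>" and b: "b = 2+\<tau>*(2*N+2)"
  shows "((\<lambda>s. 2*(1-\<tau>^2)*(s powr (2*(N+1)) * exp (v1 s) + s^2 * exp (v2 s))
      + 2*a * u s + 2*b * p s + ((u s)^2 + (p s)^2)
      + 2*\<tau> * u s * p s) has_real_derivative 0) (at r)"
proof -
  have e1: "r powr (2 * (N + 1) - 1) = r powr (2*N+1)" by (simp add: algebra_simps)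
  have e2: "r powr (2 * (N + 1)) = r powr (2*N+1) * r"
  proof -
    have "r powr (2 * (N + 1)) = r powr ((2*N+1) + 1)" by (simp add: algebra_simps)
    also have "\<dots> = r powr (2*N+1) * r powr 1" by (rule powr_add)
    finally show ?thesis using r by simp
  qed
  show ?thesis
  apply (rule derivative_eq_intros dv1 dv2 du dp r refl)+
    unfolding e1 e2 ur pr a b
    by (simp add: power2_eq_square algebra_simps)
qed
lemma D_bound:
  fixes v1 v2 :: "real \<Rightarrow> real"
  assumes c1: "continuous_on {0..} v1" and c2: "continuous_on {0..} v2" and t: "0<\<tau>" "\<tau><1" and N: "N>0"
  shows "\<exists>K. \<forall>r. 0<r \<longrightarrow> r\<le>1 \<longrightarrow> r powr (2*N+1) * exp (v1 r) + r * exp (v2 r) \<le> K"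
proof -
  have cc1: "continuous_on {0..1} v1" using c1 by (rule continuous_on_subset) auto
  have cc2: "continuous_on {0..1} v2" using c2 by (rule continuous_on_subset) auto
  obtain m1 where m1: "\<forall>y\<in>{0..1}. v1 y \<le> v1 m1"
    using continuous_attains_sup[OF compact_Icc _ cc1] by auto
  obtain m2 where m2: "\<forall>y\<in>{0..1}. v2 y \<le> v2 m2"
    using continuous_attains_sup[OF compact_Icc _ cc2] by auto
  show ?thesis
  proof (intro exI allI impI)
    fix r :: real assume r: "0<r" "r\<le>1"
    have "r powr (2*N+1) \<le> 1" using r N by (intro powr_le1) auto
    moreover have "exp (v1 r) \<le> exp (v1 m1)" using m1 r by auto
    ultimately have a: "r powr (2*N+1) * exp (v1 r) \<le> 1 * exp (v1 m1)"
      by (intro mult_mono) auto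
    have "exp (v2 r) \<le> exp (v2 m2)" using m2 r by auto
    hence b: "r * exp (v2 r) \<le> 1 * exp (v2 m2)" using r by (intro mult_mono) auto
    show "r powr (2*N+1) * exp (v1 r) + r * exp (v2 r) \<le> exp (v1 m1) + exp (v2 m2)"
      using a b by simp
  qed
qed

lemma absb:
  fixes X Y K \<tau> :: real
  assumes "0 \<le> X" "0 \<le> Y" "0<\<tau>" "\<tau><1" "X + Y \<le> K"
  shows "\<bar>- (X - \<tau>*Y)\<bar> \<le> K"
proof -
  have "\<tau>*Y \<le> Y" "0 \<le> \<tau>*Y" using assms by (auto intro: mult_left_le_one_le)
  thus ?thesis using assms by (simp only: abs_le_iff) linarith
qed

lemma key:
  assumes rs: "radial_solution N \<tau> v1 v2" and N: "N>0" and t0: "0<\<tau>" and t1: "\<tau><1"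
   and r: "r>0"
  shows "\<bar>r*deriv v1 r\<bar> \<le> 4*(2*N+4)/(1-\<tau>) \<and> \<bar>r*deriv v2 r\<bar> \<le> 4*(2*N+4)/(1-\<tau>) \<and>
     r powr (2*(N+1)) * exp (v1 r) + r^2 * exp (v2 r) \<le> 2*(2*N+4)*(4*(2*N+4)/(1-\<tau>))/(1-\<tau>^2)"
proof -
  note rs' = rs[unfolded radial_solution_def C2_pos_def]
  have cv1: "continuous_on {0..} v1" and cv2: "continuous_on {0..} v2" using rs' by auto
  have dv1: "\<And>s. s>0 \<Longrightarrow> (v1 has_real_derivative deriv v1 s) (at s)"
    using rs' DERIV_deriv_iff_real_differentiable by blast
  have dv2: "\<And>s. s>0 \<Longrightarrow> (v2 has_real_derivative deriv v2 s) (at s)"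
    using rs' DERIV_deriv_iff_real_differentiable by blast
  have du: "\<And>s. s>0 \<Longrightarrow> ((\<lambda>s. s * deriv v1 s) has_real_derivative
               - (s powr (2*N+1) * exp (v1 s) - \<tau> * s * exp (v2 s))) (at s)"
    using rs' by blast
  have dp: "\<And>s. s>0 \<Longrightarrow> ((\<lambda>s. s * deriv v2 s) has_real_derivative
               - (s * exp (v2 s) - \<tau> * s powr (2*N+1) * exp (v1 s))) (at s)"
    using rs' by blast
  obtain K0 where K0: "\<And>s. 0<s \<Longrightarrow> s\<le>1 \<Longrightarrow> s powr (2*N+1) * exp (v1 s) + s * exp (v2 s) \<le> K0"
    using D_bound[OF cv1 cv2 t0 t1 N] by blast
  have pos: "\<And>s. 0 < s powr (2*N+1) * exp (v1 s) + s * exp (v2 s) \<or> s \<le> 0"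
    by (auto intro: add_pos_pos)
  have u0: "((\<lambda>s. s * deriv v1 s) \<longlongrightarrow> 0) (at_right 0)"
  proof (rule u_to_0[OF cv1 dv1 du])
    fix s :: real assume s: "0<s" "s\<le>1"
    have "\<bar>- (s powr (2*N+1) * exp (v1 s) - \<tau> * (s * exp (v2 s)))\<bar> \<le> K0"
      using K0[OF s] t0 t1 s by (intro absb) auto
    thus "\<bar>- (s powr (2*N+1) * exp (v1 s) - \<tau> * s * exp (v2 s))\<bar> \<le> K0"
      by (simp add: mult.assoc)
  qed
  have p0: "((\<lambda>s. s * deriv v2 s) \<longlongrightarrow> 0) (at_right 0)"
  proof (rule u_to_0[OF cv2 dv2 dp])
    fix s :: real assume s: "0<s" "s\<le>1"
    have "\<bar>- (s * exp (v2 s) - \<tau> * (s powr (2*N+1) * exp (v1 s)))\<bar> \<le> K0"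
      using K0[OF s] t0 t1 s by (intro absb) auto
    thus "\<bar>- (s * exp (v2 s) - \<tau> * s powr (2*N+1) * exp (v1 s))\<bar> \<le> K0"
      by (simp add: mult.assoc)
  qed
  define a where "a = 2*N+2+2*\<tau>"
  define b where "b = 2+\<tau>*(2*N+2)"
  define u where "u = (\<lambda>s. s * deriv v1 s)"
  define p where "p = (\<lambda>s. s * deriv v2 s)"
  define H where "H = (\<lambda>s. 2*(1-\<tau>^2)*(s powr (2*(N+1)) * exp (v1 s) + s^2 * exp (v2 s))
      + 2*a * u s + 2*b * p s + ((u s)^2 + (p s)^2) + 2*\<tau> * u s * p s)"
  have dH: "(H has_real_derivative 0) (at s)" if "s>0" for s
    unfolding H_def
    by (rule Hderiv[OF that dv1[OF that] dv2[OF that]])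
       (use du[OF that] dp[OF that] that in \<open>auto simp: u_def p_def a_def b_def\<close>)
  obtain c where c: "\<forall>s\<in>{0<..}. H s = c"
    using has_field_derivative_zero_constant[of "{0<..}" H] dH
    by (auto intro: has_field_derivative_at_within)
  have Hlim: "(H \<longlongrightarrow> 0) (at_right 0)"
  proof -
    have hv1: "(v1 \<longlongrightarrow> v1 0) (at_right 0)"
      using cv1 unfolding continuous_on_def by (auto intro: tendsto_within_subset)
    have hv2: "(v2 \<longlongrightarrow> v2 0) (at_right 0)"
      using cv2 unfolding continuous_on_def by (auto intro: tendsto_within_subset)
    have pw: "((\<lambda>s::real. s powr (2*(N+1))) \<longlongrightarrow> 0) (at_right 0)"
      by (rule tendsto_zero_powrI[where b="2*(N+1)"]) (use N in \<open>auto simp: eventually_at_right_field intro!: exI[of _ 1] tendsto_ident_at\<close>)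
    have "((\<lambda>s. 2*(1-\<tau>^2)*(s powr (2*(N+1)) * exp (v1 s) + s^2 * exp (v2 s))
      + 2*a * u s + 2*b * p s + ((u s)^2 + (p s)^2) + 2*\<tau> * u s * p s) \<longlongrightarrow>
       2*(1-\<tau>^2)*(0 * exp (v1 0) + 0^2 * exp (v2 0)) + 2*a*0 + 2*b*0 + (0^2+0^2) + 2*\<tau>*0*0) (at_right 0)"
      unfolding u_def p_def
      by (intro tendsto_intros pw hv1 hv2 u0 p0 tendsto_ident_at)
    thus ?thesis unfolding H_def by simp
  qed
  have "((\<lambda>s::real. c) \<longlongrightarrow> 0) (at_right 0)"
  proof (rule Lim_transform_eventually[OF Hlim, of "\<lambda>s. c"])
    show "\<forall>\<^sub>F x in at_right 0. H x = (\<lambda>s. c) x" using c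
      by (auto simp: eventually_at_right_field intro!: exI[of _ 1])
  qed
  hence "c = 0" by (simp add: tendsto_const_iff)
  hence H0: "H r = 0" using c r by auto
  define A where "A = r powr (2*(N+1)) * exp (v1 r) + r^2 * exp (v2 r)"
  have A0: "A > 0" unfolding A_def using r by (intro add_pos_pos) auto
  have Heq: "2*(1-\<tau>^2)*A + 2*a * u r + 2*b * p r + ((u r)^2 + (p r)^2) + 2*\<tau> * u r * p r = 0"
    using H0 unfolding H_def A_def by simp
  define U where "U = u r"
  define P where "P = p r"
  define L where "L = 2*N+4"
  have Heq': "2*(1-\<tau>^2)*A + 2*a * U + 2*b * P + (U^2 + P^2) + 2*\<tau> * U * P = 0"
    using Heq unfolding U_def P_def .
  have aL: "0 < a" "a \<le> L" "0 < b" using N t0 t1 unfolding a_def b_def L_def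
    by (auto intro: add_pos_nonneg)
  have "b = 2 + \<tau>*(2*N+2)" by (simp add: b_def)
  have "\<tau>*(2*N+2) \<le> 1*(2*N+2)" using t1 N by (intro mult_right_mono) auto
  hence bL: "b \<le> L" unfolding b_def L_def by simp
  have Lp: "L > 0" using N unfolding L_def by simp
  have Q: "(1-\<tau>)*(U^2+P^2) \<le> U^2 + P^2 + 2*\<tau>*U*P"
  proof -
    have "0 \<le> \<tau>*(U + P)^2" using t0 by simp
    thus ?thesis by (simp add: power2_eq_square algebra_simps)
  qed
  have l1: "-(a*U) \<le> L*\<bar>U\<bar>"
  proof -
    have "-(a*U) \<le> \<bar>a*U\<bar>" by simp
    also have "\<dots> = a*\<bar>U\<bar>" using aL by (simp add: abs_mult)
    also have "\<dots> \<le> L*\<bar>U\<bar>" using aL by (intro mult_right_mono) auto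
    finally show ?thesis .
  qed
  have l2: "-(b*P) \<le> L*\<bar>P\<bar>"
  proof -
    have "-(b*P) \<le> \<bar>b*P\<bar>" by simp
    also have "\<dots> = b*\<bar>P\<bar>" using aL by (simp add: abs_mult)
    also have "\<dots> \<le> L*\<bar>P\<bar>" using aL bL by (intro mult_right_mono) auto
    finally show ?thesis .
  qed
  have "\<tau>*\<tau> < 1*1" by (rule mult_strict_mono) (use t0 t1 in auto)
  hence t2: "\<tau>^2 < 1" by (simp add: power2_eq_square)
  have tA: "0 \<le> 2*(1-\<tau>^2)*A" using A0 t2 by simp
  have main: "(1-\<tau>)*(U^2+P^2) + 2*(1-\<tau>^2)*A \<le> 2*L*(\<bar>U\<bar>+\<bar>P\<bar>)"
    using Heq' Q l1 l2 by (simp add: algebra_simps)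
  have qn: "0 \<le> (1-\<tau>)*(U^2+P^2)" using t1 by simp
  define m where "m = max \<bar>U\<bar> \<bar>P\<bar>"
  have m2: "m^2 \<le> U^2+P^2" unfolding m_def by (auto simp: max_def)
  have m3: "\<bar>U\<bar>+\<bar>P\<bar> \<le> 2*m" unfolding m_def by auto
  have m0: "0 \<le> m" unfolding m_def by auto
  have "(1-\<tau>)*m^2 \<le> (1-\<tau>)*(U^2+P^2)" using m2 t1 by (intro mult_left_mono) auto
  also have "\<dots> \<le> 2*L*(\<bar>U\<bar>+\<bar>P\<bar>)" using main tA by linarith
  also have "\<dots> \<le> 2*L*(2*m)" using m3 Lp by (intro mult_left_mono) auto
  finally have mm: "(1-\<tau>)*m^2 \<le> 4*L*m" by simp
  have mb: "m \<le> 4*L/(1-\<tau>)"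
  proof (cases "m = 0")
    case True thus ?thesis using Lp t1 by simp
  next
    case False
    hence mp: "m > 0" using m0 by simp
    have "((1-\<tau>)*m)*m \<le> (4*L)*m" using mm by (simp add: power2_eq_square algebra_simps)
    hence "(1-\<tau>)*m \<le> 4*L" using mp by simp
    thus ?thesis using t1 by (simp add: field_simps)
  qed
  have Ub: "\<bar>U\<bar> \<le> 4*L/(1-\<tau>)" "\<bar>P\<bar> \<le> 4*L/(1-\<tau>)" using mb unfolding m_def by auto
  have "2*(1-\<tau>^2)*A \<le> 2*L*(\<bar>U\<bar>+\<bar>P\<bar>)" using main qn by linarith
  also have "\<dots> \<le> 2*L*(2*(4*L/(1-\<tau>)))" using Ub Lp by (intro mult_left_mono) auto
  finally have "2*(1-\<tau>^2)*A \<le> 2*L*(2*(4*L/(1-\<tau>)))" .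
  moreover have "0 < 1-\<tau>^2" using t2 by simp
  ultimately have "A \<le> 2*L*(4*L/(1-\<tau>))/(1-\<tau>^2)"
  proof -
    assume h: "2*(1-\<tau>^2)*A \<le> 2*L*(2*(4*L/(1-\<tau>)))" and d: "0 < 1-\<tau>^2"
    define W where "W = 4*L/(1-\<tau>)"
    have "(1-\<tau>^2)*A \<le> 2*L*W" using h[folded W_def] by (simp add: algebra_simps)
    hence "A \<le> 2*L*W/(1-\<tau>^2)" using d by (simp add: pos_le_divide_eq mult.commute)
    thus ?thesis unfolding W_def .
  qed
  thus ?thesis using Ub unfolding A_def U_def P_def u_def p_def L_def by simp
qed

theorem mainTheorem11:
  shows "\<forall>\<rho>::real. \<rho> > 1 \<longrightarrow>
    (\<exists>\<gamma>::real. 0 < \<gamma> \<and> \<gamma> < 1 \<and>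
      (\<forall>(N::real) (\<tau>::real). N > 0 \<and> 0 < \<tau> \<and> \<tau> < 1 \<longrightarrow>
        (\<exists>C0::real. C0 > 0 \<and>
          (\<forall>r0 R0 v1 v2. 0 < r0 \<and> R0 = \<rho> * r0 \<and> radial_solution N \<tau> v1 v2 \<longrightarrow>
             (SUP r\<in>{r0..R0}. v1 r) \<le> \<gamma> * (INF r\<in>{r0..R0}. v1 r)
                + 2 * (N + 1) * (\<gamma> - 1) * ln r0 + C0 \<and>
             (SUP r\<in>{r0..R0}. v2 r) \<le> \<gamma> * (INF r\<in>{r0..R0}. v2 r)
                + 2 * (\<gamma> - 1) * ln r0 + C0))))"
proof (intro allI impI)
  fix \<rho> :: real assume rho: "\<rho> > 1"
  show "\<exists>\<gamma>::real. 0 < \<gamma> \<and> \<gamma> < 1 \<and>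
      (\<forall>(N::real) (\<tau>::real). N > 0 \<and> 0 < \<tau> \<and> \<tau> < 1 \<longrightarrow>
        (\<exists>C0::real. C0 > 0 \<and>
          (\<forall>r0 R0 v1 v2. 0 < r0 \<and> R0 = \<rho> * r0 \<and> radial_solution N \<tau> v1 v2 \<longrightarrow>
             (SUP r\<in>{r0..R0}. v1 r) \<le> \<gamma> * (INF r\<in>{r0..R0}. v1 r)
                + 2 * (N + 1) * (\<gamma> - 1) * ln r0 + C0 \<and>
             (SUP r\<in>{r0..R0}. v2 r) \<le> \<gamma> * (INF r\<in>{r0..R0}. v2 r)
                + 2 * (\<gamma> - 1) * ln r0 + C0)))"
  proof (rule exI[of _ "1/2"], intro conjI allI impI)
    fix N \<tau> :: real assume Nt: "N > 0 \<and> 0 < \<tau> \<and> \<tau> < 1"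
    hence N: "N > 0" and t0: "0 < \<tau>" and t1: "\<tau> < 1" by auto
    define M where "M = 4*(2*N+4)/(1-\<tau>)"
    define K where "K = 2*(2*N+4)*M/(1-\<tau>^2)"
    have Mp: "M > 0" unfolding M_def using N t1 by simp
    have "\<tau>*\<tau> < 1*1" by (rule mult_strict_mono) (use t0 t1 in auto)
    hence t2: "\<tau>^2 < 1" by (simp add: power2_eq_square)
    have Kp: "K > 0" unfolding K_def using N t2 Mp by simp
    show "\<exists>C0::real. C0 > 0 \<and>
          (\<forall>r0 R0 v1 v2. 0 < r0 \<and> R0 = \<rho> * r0 \<and> radial_solution N \<tau> v1 v2 \<longrightarrow>
             (SUP r\<in>{r0..R0}. v1 r) \<le> 1/2 * (INF r\<in>{r0..R0}. v1 r)
                + 2 * (N + 1) * (1/2 - 1) * ln r0 + C0 \<and>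
             (SUP r\<in>{r0..R0}. v2 r) \<le> 1/2 * (INF r\<in>{r0..R0}. v2 r)
                + 2 * (1/2 - 1) * ln r0 + C0)"
    proof (rule exI[of _ "M * ln \<rho> + \<bar>ln K\<bar> + 1"], intro conjI allI impI)
      show "0 < M * ln \<rho> + \<bar>ln K\<bar> + 1" using Mp rho
        by (metis abs_ge_zero add_nonneg_nonneg add_pos_nonneg ln_gt_zero less_eq_real_def mult_pos_pos zero_less_one)
    next
      fix r0 R0 v1 v2 assume h: "0 < r0 \<and> R0 = \<rho> * r0 \<and> radial_solution N \<tau> v1 v2"
      hence r0: "0 < r0" and R0: "R0 = \<rho> * r0" and rs: "radial_solution N \<tau> v1 v2" by auto
      note rs' = rs[unfolded radial_solution_def C2_pos_def]
      have dv1: "\<And>s. s>0 \<Longrightarrow> (v1 has_real_derivative deriv v1 s) (at s)"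
        using rs' DERIV_deriv_iff_real_differentiable by blast
      have dv2: "\<And>s. s>0 \<Longrightarrow> (v2 has_real_derivative deriv v2 s) (at s)"
        using rs' DERIV_deriv_iff_real_differentiable by blast
      note k = key[OF rs N t0 t1, folded M_def, folded K_def]
      have b1: "\<And>s. s>0 \<Longrightarrow> \<bar>s * deriv v1 s\<bar> \<le> M" using k by blast
      have b2: "\<And>s. s>0 \<Longrightarrow> \<bar>s * deriv v2 s\<bar> \<le> M" using k by blast
      have A1: "\<And>s. s>0 \<Longrightarrow> s powr (2*(N+1)) * exp (v1 s) \<le> K"
      proof -
        fix s :: real assume s: "s > 0"
        have "0 \<le> s^2 * exp (v2 s)" by simp
        thus "s powr (2*(N+1)) * exp (v1 s) \<le> K" using k[OF s] by linarith
      qed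
      have A2: "\<And>s. s>0 \<Longrightarrow> s powr 2 * exp (v2 s) \<le> K"
      proof -
        fix s :: real assume s: "s > 0"
        have "0 \<le> s powr (2*(N+1)) * exp (v1 s)" by simp
        moreover have "s powr 2 * exp (v2 s) = s^2 * exp (v2 s)" using s by simp
        moreover have "s powr (2*(N+1)) * exp (v1 s) + s^2 * exp (v2 s) \<le> K" using k[OF s] by blast
        ultimately show "s powr 2 * exp (v2 s) \<le> K" by linarith
      qed
      show "(SUP r\<in>{r0..R0}. v1 r) \<le> 1/2 * (INF r\<in>{r0..R0}. v1 r)
                + 2 * (N + 1) * (1/2 - 1) * ln r0 + (M * ln \<rho> + \<bar>ln K\<bar> + 1)"
        unfolding R0 by (rule harnack[OF dv1 b1 A1 Kp r0 rho])
      show "(SUP r\<in>{r0..R0}. v2 r) \<le> 1/2 * (INF r\<in>{r0..R0}. v2 r)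
                + 2 * (1/2 - 1) * ln r0 + (M * ln \<rho> + \<bar>ln K\<bar> + 1)"
        unfolding R0 by (rule harnack[OF dv2 b2 A2 Kp r0 rho])
    qed
  qed (auto)
qed

end
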